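(* For classes $[\mathcal{K}],[\mathcal{J}]\in\mathbb{P}(\mathcal{C})$: (1) $\Delta([\mathcal{K}],[\mathcal{J}])=1$ if and only if $\delta([\mathcal{K}],[\mathcal{J}])=1$; (2) if $\delta([\mathcal{K}],[\mathcal{J}])=2$, then $\Delta([\mathcal{K}],[\mathcal{J}])=2$.
   Context: $\mathcal{C}$ is the smooth knot concordance group; $d(\mathcal{K},\mathcal{J})=g_4(\mathcal{K}\,\#\,-\mathcal{J})$, $g_4$ the smooth four-genus. Let $\mathcal{C}^\circ=\mathcal{C}\setminus\{0\}$; $\mathcal{K}\sim'\mathcal{J}$ if there exist $\mathcal{M}\in\mathcal{C}$ and $r,s\in\mathbb{Z}$ with $\mathcal{K}=r\mathcal{M}$, $\mathcal{J}=s\mathcal{M}$; $\sim$ is the equivalence relation generated by $\sim'$; $\mathbb{P}(\mathcal{C})=\mathcal{C}^\circ/\sim$. Define $\delta([\mathcal{K}],[\mathcal{J}])=\min\{d(\mathcal{K}',\mathcal{J}'):\mathcal{K}'\in[\mathcal{K}],\mathcal{J}'\in[\mathcal{J}]\}$ and $\Delta([\mathcal{K}],[\mathcal{J}])=\min\sum_{i=0}^{n-1}\delta([\mathcal{K}_i],[\mathcal{K}_{i+1}])$ over all finite sequences of classes with $[\mathcal{K}_0]=[\mathcal{K}]$, $[\mathcal{K}_n]=[\mathcal{J}]$. *)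

theory Defs
  imports Main
begin

text \<open>Abstract model: the concordance group is modelled by an arbitrary abelian
group (type class ab_group_add), the smooth four-genus by a function g4 into nat.\<close>

definition zsmul :: "int \<Rightarrow> 'a::ab_group_add \<Rightarrow> 'a" where
  "zsmul r x = (if r \<ge> 0 then (\<Sum>_\<in>{..<nat r}. x) else - (\<Sum>_\<in>{..<nat (- r)}. x))"

definition cdist :: "('a::ab_group_add \<Rightarrow> nat) \<Rightarrow> 'a \<Rightarrow> 'a \<Rightarrow> nat" where
  "cdist g4 K J = g4 (K + - J)"

definition Cnz :: "'a::ab_group_add set" where
  "Cnz = UNIV - {0}"

definition prerel :: "'a::ab_group_add \<Rightarrow> 'a \<Rightarrow> bool" where
  "prerel K J \<longleftrightarrow> (\<exists>M r s. K = zsmul r M \<and> J = zsmul s M)"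

definition simrel :: "('a::ab_group_add \<times> 'a) set" where
  "simrel = (Id_on Cnz \<union> {(K, J). K \<in> Cnz \<and> J \<in> Cnz \<and> prerel K J}
             \<union> {(K, J). K \<in> Cnz \<and> J \<in> Cnz \<and> prerel J K})\<^sup>*"

definition PC :: "'a::ab_group_add set set" where
  "PC = Cnz // simrel"

definition delta :: "('a::ab_group_add \<Rightarrow> nat) \<Rightarrow> 'a set \<Rightarrow> 'a set \<Rightarrow> nat" where
  "delta g4 A B = Inf {cdist g4 K' J' | K' J'. K' \<in> A \<and> J' \<in> B}"

definition Delta :: "('a::ab_group_add \<Rightarrow> nat) \<Rightarrow> 'a set \<Rightarrow> 'a set \<Rightarrow> nat" where
  "Delta g4 A B = Inf {sum_list (map2 (delta g4) xs (tl xs)) | xs.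
      xs \<noteq> [] \<and> hd xs = A \<and> last xs = B \<and> set xs \<subseteq> PC}"

end

theory Submission
  imports Defs
begin

lemma PC_cases:
  assumes "X \<in> (PC :: 'a::ab_group_add set set)"
  obtains x where "x \<in> Cnz" "X = simrel `` {x}"
  using assms unfolding PC_def quotient_def by blast

lemma PC_nonempty:
  assumes "X \<in> (PC :: 'a::ab_group_add set set)"
  shows "X \<noteq> {}"
proof -
  obtain x where "x \<in> Cnz" "X = simrel `` {x}" using PC_cases[OF assms] by blast
  then have "x \<in> X" unfolding simrel_def by auto
  then show ?thesis by auto
qed

lemma simrel_sym: "sym (simrel :: ('a::ab_group_add \<times> 'a) set)"
  unfolding simrel_def
  by (rule sym_rtrancl) (auto simp: sym_def Id_on_def)

lemma simrel_trans: "trans (simrel :: ('a::ab_group_add \<times> 'a) set)"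
  unfolding simrel_def by (rule trans_rtrancl)

lemma PC_inter:
  assumes "X \<in> (PC :: 'a::ab_group_add set set)" "Y \<in> PC" "z \<in> X" "z \<in> Y"
  shows "X = Y"
proof -
  obtain x where x: "X = simrel `` {x}" using PC_cases[OF assms(1)] by blast
  obtain y where y: "Y = simrel `` {y}" using PC_cases[OF assms(2)] by blast
  have "(x, z) \<in> simrel" "(y, z) \<in> simrel" using assms x y by auto
  then have zy: "(z, y) \<in> simrel" and zx: "(z, x) \<in> simrel"
    using simrel_sym by (auto dest: symD)
  have xy: "(x, y) \<in> simrel" "(y, x) \<in> simrel"
    using transD[OF simrel_trans \<open>(x, z) \<in> simrel\<close> zy]
      transD[OF simrel_trans \<open>(y, z) \<in> simrel\<close> zx] by auto
  show ?thesis
  proof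
    show "X \<subseteq> Y" using x y xy(2) simrel_trans by (auto dest: transD)
    show "Y \<subseteq> X" using x y xy(1) simrel_trans by (auto dest: transD)
  qed
qed

context
  fixes g4 :: "'a::ab_group_add \<Rightarrow> nat"
  assumes g4_zero: "\<And>x. g4 x = 0 \<longleftrightarrow> x = 0"
begin

lemma delta_attained:
  assumes "X \<in> PC" "Y \<in> PC"
  obtains K J where "K \<in> X" "J \<in> Y" "delta g4 X Y = cdist g4 K J"
proof -
  let ?S = "{cdist g4 K' J' | K' J'. K' \<in> X \<and> J' \<in> Y}"
  have "?S \<noteq> {}" using PC_nonempty[OF assms(1)] PC_nonempty[OF assms(2)] by blast
  then have "Inf ?S \<in> ?S" by (rule Inf_nat_def1)
  then show ?thesis using that unfolding delta_def by blast
qed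

lemma delta_zero_eq:
  assumes "X \<in> PC" "Y \<in> PC" "delta g4 X Y = 0"
  shows "X = Y"
proof -
  obtain K J where "K \<in> X" "J \<in> Y" "delta g4 X Y = cdist g4 K J"
    using delta_attained[OF assms(1,2)] by blast
  then have "K + - J = 0" using assms(3) g4_zero unfolding cdist_def by simp
  then have "K = J" by (metis eq_neg_iff_add_eq_0 minus_minus)
  then show ?thesis using PC_inter[OF assms(1,2) \<open>K \<in> X\<close>] \<open>J \<in> Y\<close> by simp
qed

lemma delta_self:
  assumes "X \<in> PC"
  shows "delta g4 X X = 0"
proof -
  obtain x where "x \<in> X" using PC_nonempty[OF assms] by blast
  have "cdist g4 x x = 0" unfolding cdist_def using g4_zero by simp
  then have "0 \<in> {cdist g4 K' J' | K' J'. K' \<in> X \<and> J' \<in> X}"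
    using \<open>x \<in> X\<close> by (metis (mono_tags, lifting) mem_Collect_eq)
  then have "Inf {cdist g4 K' J' | K' J'. K' \<in> X \<and> J' \<in> X} \<le> 0"
    by (rule cInf_lower) simp
  then show ?thesis unfolding delta_def by simp
qed

lemma chain_lemma:
  assumes "xs \<noteq> []" "set xs \<subseteq> PC"
  shows "(sum_list (map2 (delta g4) xs (tl xs)) = 0 \<longrightarrow> hd xs = last xs)
       \<and> (sum_list (map2 (delta g4) xs (tl xs)) = 1 \<longrightarrow> delta g4 (hd xs) (last xs) = 1)"
  using assms
proof (induction xs rule: induct_list012)
  case 1 then show ?case by simp
next
  case (2 x) then show ?case by simp
next
  case (3 x y rest)
  have x: "x \<in> PC" and y: "y \<in> PC" using "3.prems" by auto
  have IH: "(sum_list (map2 (delta g4) (y # rest) rest) = 0 \<longrightarrow> y = last (y # rest))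
       \<and> (sum_list (map2 (delta g4) (y # rest) rest) = 1 \<longrightarrow> delta g4 y (last (y # rest)) = 1)"
    using "3.IH"(2) "3.prems" by simp
  have s: "sum_list (map2 (delta g4) (x # y # rest) (tl (x # y # rest)))
        = delta g4 x y + sum_list (map2 (delta g4) (y # rest) rest)" by simp
  show ?case
  proof (cases "delta g4 x y = 0")
    case True
    then have "x = y" using delta_zero_eq x y by blast
    then show ?thesis using IH s True by simp
  next
    case False
    show ?thesis
    proof (intro conjI impI)
      assume "sum_list (map2 (delta g4) (x # y # rest) (tl (x # y # rest))) = 0"
      then show "hd (x # y # rest) = last (x # y # rest)" using False s by simp
    next
      assume "sum_list (map2 (delta g4) (x # y # rest) (tl (x # y # rest))) = 1"
      then have "delta g4 x y = 1" "sum_list (map2 (delta g4) (y # rest) rest) = 0"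
        using False s by linarith+
      then show "delta g4 (hd (x # y # rest)) (last (x # y # rest)) = 1" using IH by simp
    qed
  qed
qed

lemma Delta_le_delta:
  assumes "A \<in> PC" "B \<in> PC"
  shows "Delta g4 A B \<le> delta g4 A B"
proof -
  have "delta g4 A B \<in> {sum_list (map2 (delta g4) xs (tl xs)) | xs.
      xs \<noteq> [] \<and> hd xs = A \<and> last xs = B \<and> set xs \<subseteq> PC}"
    using assms by (intro CollectI exI[of _ "[A, B]"]) simp
  then show ?thesis unfolding Delta_def by (rule cInf_lower) simp
qed

lemma Delta_attained:
  assumes "A \<in> PC" "B \<in> PC"
  obtains xs where "xs \<noteq> []" "hd xs = A" "last xs = B" "set xs \<subseteq> PC"
    "Delta g4 A B = sum_list (map2 (delta g4) xs (tl xs))"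
proof -
  let ?S = "{sum_list (map2 (delta g4) xs (tl xs)) | xs.
      xs \<noteq> [] \<and> hd xs = A \<and> last xs = B \<and> set xs \<subseteq> PC}"
  have "delta g4 A B \<in> ?S"
    using assms by (intro CollectI exI[of _ "[A, B]"]) simp
  then have "Inf ?S \<in> ?S" by (intro Inf_nat_def1) blast
  then show ?thesis using that unfolding Delta_def by blast
qed

lemma Delta_one:
  assumes "A \<in> PC" "B \<in> PC" "Delta g4 A B = 1"
  shows "delta g4 A B = 1"
proof -
  obtain xs where "xs \<noteq> []" "hd xs = A" "last xs = B" "set xs \<subseteq> PC"
    "Delta g4 A B = sum_list (map2 (delta g4) xs (tl xs))"
    using Delta_attained[OF assms(1,2)] by blast
  then show ?thesis using chain_lemma[of xs] assms(3) by simp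
qed

lemma Delta_zero:
  assumes "A \<in> PC" "B \<in> PC" "Delta g4 A B = 0"
  shows "A = B"
proof -
  obtain xs where "xs \<noteq> []" "hd xs = A" "last xs = B" "set xs \<subseteq> PC"
    "Delta g4 A B = sum_list (map2 (delta g4) xs (tl xs))"
    using Delta_attained[OF assms(1,2)] by blast
  then show ?thesis using chain_lemma[of xs] assms(3) by simp
qed

end

theorem theorem6p3:
  fixes g4 :: "'a::ab_group_add \<Rightarrow> nat" and A B :: "'a set"
  assumes g4_zero: "\<And>x. g4 x = 0 \<longleftrightarrow> x = 0"
    and g4_neg: "\<And>x. g4 (- x) = g4 x"
    and g4_sub: "\<And>x y. g4 (x + y) \<le> g4 x + g4 y"
    and A: "A \<in> PC" and B: "B \<in> PC"
  shows "(Delta g4 A B = 1 \<longleftrightarrow> delta g4 A B = 1)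
         \<and> (delta g4 A B = 2 \<longrightarrow> Delta g4 A B = 2)"
proof -
  have le: "Delta g4 A B \<le> delta g4 A B" using Delta_le_delta[OF g4_zero A B] .
  have d1: "Delta g4 A B = 1 \<Longrightarrow> delta g4 A B = 1" using Delta_one[OF g4_zero A B] .
  have z: "Delta g4 A B = 0 \<Longrightarrow> A = B" using Delta_zero[OF g4_zero A B] .
  have ds: "delta g4 A A = 0" using delta_self[OF g4_zero A] .
  have 1: "Delta g4 A B = 1 \<longleftrightarrow> delta g4 A B = 1"
  proof
    assume "delta g4 A B = 1"
    then show "Delta g4 A B = 1" using le z ds by (cases "Delta g4 A B = 0") auto
  qed (rule d1)
  moreover have "delta g4 A B = 2 \<longrightarrow> Delta g4 A B = 2"
  proof
    assume h: "delta g4 A B = 2"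
    have "Delta g4 A B \<noteq> 0"
    proof
      assume "Delta g4 A B = 0"
      then have "A = B" by (rule z)
      then show False using h ds by simp
    qed
    moreover have "Delta g4 A B \<noteq> 1" using 1 h by simp
    ultimately show "Delta g4 A B = 2" using le h by linarith
  qed
  ultimately show ?thesis by blast
qed

end
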